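(* Let $A(Z,Z'_Y)$ be a polynomial in $Z\in\mathbb{R}^{2n}$, $Z'_Y\in\mathbb{R}^{2m}$ such that $$\mathscr{P}_n\circ(A\cdot\mathscr{E}_{n,m})\circ\mathscr{P}_m=A\cdot\mathscr{E}_{n,m}.$$ Then $A$ is a polynomial in $z=(z_1,\dots,z_n)$ and $\overline{z}'_Y=(\overline{z}'_1,\dots,\overline{z}'_m)$.
   Context: $m\le n$. For $Z\in\mathbb{R}^{2n}$ write $z_i=Z_{2i-1}+iZ_{2i}$; $\mathbb{R}^{2m}\subset\mathbb{R}^{2n}$ via the first $2m$ coordinates, $Z=(Z_Y,Z_N)$ with $Z_Y\in\mathbb{R}^{2m}$, and $z'_i$ likewise for $Z'$. Define the kernels $\mathscr{P}_k(Z,Z')=\exp\big(-\frac{\pi}{2}\sum_{i=1}^k(|z_i|^2+|z'_i|^2-2z_i\overline{z}'_i)\big)$ on $\mathbb{R}^{2k}\times\mathbb{R}^{2k}$ ($k=n,m$), and $\mathscr{E}_{n,m}(Z,Z'_Y)=\exp\big(-\frac{\pi}{2}\sum_{i=1}^m(|z_i|^2+|z'_i|^2-2z_i\overline{z}'_i)-\frac{\pi}{2}\sum_{i=m+1}^n|z_i|^2\big)$ on $\mathbb{R}^{2n}\times\mathbb{R}^{2m}$. $A\cdot\mathscr{E}_{n,m}$ is the pointwise product kernel, and kernels are composed as integral operators, $(K_1\circ K_2)(Z,Z'')=\int K_1(Z,Z')K_2(Z',Z'')\,dZ'$ with Lebesgue measure on the intermediate space ($\mathbb{R}^{2n}$ or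 $\mathbb{R}^{2m}$). *)

theory Defs
  imports "HOL-Analysis.Analysis"
begin

text \<open>Points of R^(2k) are functions nat => real, coordinates 0..2k-1 (0-indexed);
  Lebesgue measure on R^(2k) is the product of lborel over {..<2k}.\<close>

definition leb :: "nat \<Rightarrow> (nat \<Rightarrow> real) measure" where
  "leb k = PiM {..<2*k} (\<lambda>_. lborel)"

text \<open>complex coordinate z_i = Z_(2i-1) + i Z_(2i) (1-indexed); here 0-indexed i.\<close>
definition zc :: "(nat \<Rightarrow> real) \<Rightarrow> nat \<Rightarrow> complex" where
  "zc Z i = Complex (Z (2*i)) (Z (2*i+1))"

definition Pk :: "nat \<Rightarrow> (nat \<Rightarrow> real) \<Rightarrow> (nat \<Rightarrow> real) \<Rightarrow> complex" where
  "Pk k Z Z' = exp (- (of_real (pi/2)) *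
     (\<Sum>i<k. of_real ((cmod (zc Z i))\<^sup>2) + of_real ((cmod (zc Z' i))\<^sup>2)
              - 2 * zc Z i * cnj (zc Z' i)))"

definition Enm :: "nat \<Rightarrow> nat \<Rightarrow> (nat \<Rightarrow> real) \<Rightarrow> (nat \<Rightarrow> real) \<Rightarrow> complex" where
  "Enm n m Z Z' = exp (- (of_real (pi/2)) *
     (\<Sum>i<m. of_real ((cmod (zc Z i))\<^sup>2) + of_real ((cmod (zc Z' i))\<^sup>2)
              - 2 * zc Z i * cnj (zc Z' i))
     - (of_real (pi/2)) * (\<Sum>i\<in>{m..<n}. of_real ((cmod (zc Z i))\<^sup>2)))"

definition kcomp :: "nat \<Rightarrow> ((nat \<Rightarrow> real) \<Rightarrow> (nat \<Rightarrow> real) \<Rightarrow> complex)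
    \<Rightarrow> ((nat \<Rightarrow> real) \<Rightarrow> (nat \<Rightarrow> real) \<Rightarrow> complex)
    \<Rightarrow> (nat \<Rightarrow> real) \<Rightarrow> (nat \<Rightarrow> real) \<Rightarrow> complex" where
  "kcomp k K1 K2 Z Z'' = (\<integral>Z'. K1 Z Z' * K2 Z' Z'' \<partial>leb k)"

inductive cpoly :: "('a \<Rightarrow> complex) set \<Rightarrow> ('a \<Rightarrow> complex) \<Rightarrow> bool" for G where
  const: "cpoly G (\<lambda>x. c)"
| gen: "g \<in> G \<Longrightarrow> cpoly G g"
| add: "cpoly G f \<Longrightarrow> cpoly G g \<Longrightarrow> cpoly G (\<lambda>x. f x + g x)"
| mult: "cpoly G f \<Longrightarrow> cpoly G g \<Longrightarrow> cpoly G (\<lambda>x. f x * g x)"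

definition real_gens :: "nat \<Rightarrow> nat \<Rightarrow> ((nat \<Rightarrow> real) \<times> (nat \<Rightarrow> real) \<Rightarrow> complex) set" where
  "real_gens n m = {(\<lambda>(Z,W). complex_of_real (Z j)) | j. j < 2*n}
                 \<union> {(\<lambda>(Z,W). complex_of_real (W j)) | j. j < 2*m}"

definition hol_gens :: "nat \<Rightarrow> nat \<Rightarrow> ((nat \<Rightarrow> real) \<times> (nat \<Rightarrow> real) \<Rightarrow> complex) set" where
  "hol_gens n m = {(\<lambda>(Z,W). zc Z i) | i. i < n}
                \<union> {(\<lambda>(Z,W). cnj (zc W i)) | i. i < m}"

end

theory Submission
  imports Defs "HOL-Probability.Characteristic_Functions" "HOL-Real_Asymp.Real_Asymp"
begin


lemma gauss_real_eq:
  "exp (B*x - pi*x\<^sup>2) = exp (B\<^sup>2/(4*pi)) * normal_density (B/(2*pi)) (1/sqrt(2*pi)) x"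
proof -
  have nd: "normal_density (B/(2*pi)) (1/sqrt(2*pi)) x = exp (-(x - B/(2*pi))\<^sup>2 * pi)"
    by (simp add: normal_density_def power2_eq_square)
  have "B*x - pi*x\<^sup>2 = B\<^sup>2/(4*pi) + (-(x - B/(2*pi))\<^sup>2 * pi)"
    by (simp add: field_simps power2_eq_square)
  then show ?thesis
    by (simp only: nd exp_add[symmetric])
qed

lemma integrable_gauss_real: "integrable lborel (\<lambda>x::real. exp (B*x - pi*x\<^sup>2))"
  unfolding gauss_real_eq by (intro integrable_mult_right integrable_normal_density) auto

lemma pow_le_fact_exp: "0 \<le> (x::real) \<Longrightarrow> x^k \<le> fact k * exp x"
proof -
  assume x: "0 \<le> x"
  have sm: "summable (\<lambda>n. x^n /\<^sub>R fact n)" using exp_converges[of x] by (simp add: sums_iff)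
  have nn: "\<And>n. n \<notin> {k} \<Longrightarrow> 0 \<le> x^n /\<^sub>R fact n" using x by auto
  have "x^k /\<^sub>R fact k \<le> (\<Sum>n. x^n /\<^sub>R fact n)"
    using sum_le_suminf[OF sm _ nn, of "{k}"] by simp
  also have "\<dots> = exp x" using exp_converges[of x] by (simp add: sums_iff)
  finally show ?thesis by (simp add: field_simps)
qed

definition gk :: "nat \<Rightarrow> complex \<Rightarrow> complex \<Rightarrow> complex" where
  "gk k c z = z^k * exp (c*z - of_real pi * z\<^sup>2)"

definition fk :: "nat \<Rightarrow> complex \<Rightarrow> real \<Rightarrow> complex" where
  "fk k c x = gk k c (of_real x)"

lemma norm_fk: "norm (fk k c x) = \<bar>x\<bar>^k * exp (Re c * x - pi * x\<^sup>2)"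
proof -
  have "Re (c * of_real x - of_real pi * (of_real x)\<^sup>2) = Re c * x - pi * x\<^sup>2"
    by (simp add: power2_eq_square)
  then show ?thesis by (simp add: fk_def gk_def norm_mult norm_power)
qed

lemma fk_bound: "norm (fk k c x) \<le> fact k * (exp ((\<bar>Re c\<bar>+1)*x - pi*x\<^sup>2) + exp (-(\<bar>Re c\<bar>+1)*x - pi*x\<^sup>2))"
proof -
  have "norm (fk k c x) \<le> fact k * exp \<bar>x\<bar> * exp (Re c * x - pi * x\<^sup>2)"
    unfolding norm_fk by (intro mult_right_mono pow_le_fact_exp) auto
  also have "\<dots> = fact k * exp (\<bar>x\<bar> + Re c * x - pi * x\<^sup>2)"
    by (simp add: exp_add[symmetric] algebra_simps)
  also have "\<dots> \<le> fact k * (exp ((\<bar>Re c\<bar>+1)*x - pi*x\<^sup>2) + exp (-(\<bar>Re c\<bar>+1)*x - pi*x\<^sup>2))"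
  proof (intro mult_left_mono)
    have "\<bar>x\<bar> + Re c * x \<le> (\<bar>Re c\<bar>+1)*x \<or> \<bar>x\<bar> + Re c * x \<le> -(\<bar>Re c\<bar>+1)*x"
    proof (cases "x \<ge> 0")
      case True
      have "Re c * x \<le> \<bar>Re c\<bar> * x" using True by (intro mult_right_mono) auto
      then show ?thesis using True by (auto simp: algebra_simps)
    next
      case False
      have "Re c * x \<le> - \<bar>Re c\<bar> * x" using False by (intro mult_right_mono_neg) auto
      then show ?thesis using False by (auto simp: algebra_simps)
    qed
    then show "exp (\<bar>x\<bar> + Re c * x - pi * x\<^sup>2) \<le> exp ((\<bar>Re c\<bar>+1)*x - pi*x\<^sup>2) + exp (-(\<bar>Re c\<bar>+1)*x - pi*x\<^sup>2)"
      by (smt (verit, best) exp_gt_zero exp_le_cancel_iff)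
  qed auto
  finally show ?thesis .
qed

lemma cont_gk: "continuous_on UNIV (gk k c)"
  unfolding gk_def by (intro continuous_intros)

lemma cont_fk[continuous_intros]: "continuous_on UNIV (fk k c)"
  unfolding fk_def[abs_def] gk_def by (intro continuous_intros)

lemma meas_fk[measurable]: "fk k c \<in> borel_measurable borel"
  using cont_fk by (rule borel_measurable_continuous_onI)

lemma integrable_fk: "integrable lborel (fk k c)"
proof (rule Bochner_Integration.integrable_bound)
  show "integrable lborel (\<lambda>x. fact k * (exp ((\<bar>Re c\<bar>+1)*x - pi*x\<^sup>2) + exp (-(\<bar>Re c\<bar>+1)*x - pi*x\<^sup>2)))"
    by (intro integrable_mult_right Bochner_Integration.integrable_add integrable_gauss_real)
  show "AE x in lborel. norm (fk k c x) \<le> norm (fact k * (exp ((\<bar>Re c\<bar>+1)*x - pi*x\<^sup>2) + exp (-(\<bar>Re c\<bar>+1)*x - pi*x\<^sup>2)))"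
    using fk_bound[of k c] by (intro AE_I2) (auto intro: order.trans)
qed measurable

lemma fk_lim_top: "(fk k c \<longlongrightarrow> 0) at_top"
proof (rule Lim_null_comparison)
  show "\<forall>\<^sub>F x in at_top. norm (fk k c x) \<le> fact k * (exp ((\<bar>Re c\<bar>+1)*x - pi*x\<^sup>2) + exp (-(\<bar>Re c\<bar>+1)*x - pi*x\<^sup>2))"
    using fk_bound by auto
  show "((\<lambda>x. fact k * (exp ((\<bar>Re c\<bar>+1)*x - pi*x\<^sup>2) + exp (-(\<bar>Re c\<bar>+1)*x - pi*x\<^sup>2))) \<longlongrightarrow> 0) at_top"
    by real_asymp
qed

lemma fk_lim_bot: "(fk k c \<longlongrightarrow> 0) at_bot"
proof (rule Lim_null_comparison)
  show "\<forall>\<^sub>F x in at_bot. norm (fk k c x) \<le> fact k * (exp ((\<bar>Re c\<bar>+1)*x - pi*x\<^sup>2) + exp (-(\<bar>Re c\<bar>+1)*x - pi*x\<^sup>2))"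
    using fk_bound by auto
  show "((\<lambda>x. fact k * (exp ((\<bar>Re c\<bar>+1)*x - pi*x\<^sup>2) + exp (-(\<bar>Re c\<bar>+1)*x - pi*x\<^sup>2))) \<longlongrightarrow> 0) at_bot"
    by real_asymp
qed



definition Gi :: "nat \<Rightarrow> complex \<Rightarrow> complex" where
  "Gi k c = integral\<^sup>L lborel (fk k c)"

lemma gk_deriv: "(gk k c has_field_derivative
   (of_nat k * gk (k-1) c z + c * gk k c z - 2 * of_real pi * gk (Suc k) c z)) (at z)"
proof -
  have "(gk k c has_field_derivative
     (of_nat k * z^(k-1) * exp (c*z - of_real pi * z\<^sup>2) + z^k * (exp (c*z - of_real pi * z\<^sup>2) * (c - of_real pi * (2 * z))))) (at z)"
    unfolding gk_def[abs_def]
    by (auto intro!: derivative_eq_intros simp: power2_eq_square algebra_simps)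
  moreover have "of_nat k * z^(k-1) * exp (c*z - of_real pi * z\<^sup>2) + z^k * (exp (c*z - of_real pi * z\<^sup>2) * (c - of_real pi * (2 * z)))
     = of_nat k * gk (k-1) c z + c * gk k c z - 2 * of_real pi * gk (Suc k) c z"
    by (simp add: gk_def algebra_simps)
  ultimately show ?thesis by simp
qed

lemma lbint_UNIV: "interval_lebesgue_integral lborel (-\<infinity>) \<infinity> f = integral\<^sup>L lborel f"
  by (simp add: interval_lebesgue_integral_def set_lebesgue_integral_def)

lemma setint_UNIV: "set_integrable lborel (einterval (-\<infinity>) \<infinity>) f = integrable lborel f"
  by (simp add: set_integrable_def)

lemma Gi_rec: "of_nat k * Gi (k-1) c + c * Gi k c - 2 * of_real pi * Gi (Suc k) c = 0"
proof -
  let ?f = "\<lambda>x. of_nat k * fk (k-1) c x + c * fk k c x - 2 * of_real pi * fk (Suc k) c x"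
  have int: "integrable lborel ?f"
    by (intro Bochner_Integration.integrable_diff Bochner_Integration.integrable_add
          integrable_mult_right integrable_fk)
  have "interval_lebesgue_integral lborel (-\<infinity>) \<infinity> ?f = 0 - 0"
  proof (rule interval_integral_FTC_integrable[where F="fk k c"])
    show "(fk k c has_vector_derivative ?f x) (at x)" for x
      unfolding fk_def[abs_def] by (rule has_vector_derivative_real_field[OF gk_deriv])
    show "isCont ?f x" for x
      using cont_fk by (intro continuous_intros) (auto simp: continuous_on_eq_continuous_at)
    show "set_integrable lborel (einterval (-\<infinity>) \<infinity>) ?f" using int by (simp only: setint_UNIV)
    show "((fk k c \<circ> real_of_ereal) \<longlongrightarrow> 0) (at_right (-\<infinity>))"
      by (simp add: ereal_tendsto_simps1 fk_lim_bot)
    show "((fk k c \<circ> real_of_ereal) \<longlongrightarrow> 0) (at_left \<infinity>)"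
      by (simp add: ereal_tendsto_simps1 fk_lim_top)
  qed simp
  then have "integral\<^sup>L lborel ?f = 0" by (simp add: lbint_UNIV)
  moreover have "integral\<^sup>L lborel ?f = of_nat k * Gi (k-1) c + c * Gi k c - 2 * of_real pi * Gi (Suc k) c"
    unfolding Gi_def
    by (subst Bochner_Integration.integral_diff Bochner_Integration.integral_add integral_mult_right_zero
         | intro Bochner_Integration.integrable_diff Bochner_Integration.integrable_add
          integrable_mult_right integrable_fk)+ simp
  ultimately show ?thesis by simp
qed



lemma fourier_gauss: "(\<integral>x. complex_of_real (exp (- x\<^sup>2/2)) * iexp (t*x) \<partial>lborel) = sqrt (2*pi) * exp (- t\<^sup>2/2)"
proof -
  have "char std_normal_distribution t = (\<integral>x. std_normal_density x *\<^sub>R iexp (t*x) \<partial>lborel)"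
    unfolding char_def by (subst integral_density) auto
  also have "\<dots> = (1/sqrt(2*pi)) * (\<integral>x. complex_of_real (exp (- x\<^sup>2/2)) * iexp (t*x) \<partial>lborel)"
    unfolding std_normal_density_def scaleR_conv_of_real
    by (simp add: integral_mult_right_zero[symmetric] mult.assoc del: of_real_mult)
  finally have "(1/sqrt(2*pi)) * (\<integral>x. complex_of_real (exp (- x\<^sup>2/2)) * iexp (t*x) \<partial>lborel) = exp (- t\<^sup>2/2)"
    by (simp add: char_std_normal_distribution)
  then show ?thesis by (simp add: field_simps)
qed

lemma Gi0: "Gi 0 c = exp (c\<^sup>2 / (4 * of_real pi))"
proof -
  define a where "a = Re c"
  define b where "b = Im c"
  define \<sigma> where "\<sigma> = 1 / sqrt (2*pi)"
  define \<mu> where "\<mu> = a / (2*pi)"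
  have c: "c = Complex a b" by (simp add: a_def b_def)
  have \<sigma>: "\<sigma> \<noteq> 0" "\<sigma> > 0" "\<sigma>\<^sup>2 = 1/(2*pi)" by (auto simp: \<sigma>_def power_divide)
  have "Gi 0 c = \<bar>\<sigma>\<bar> *\<^sub>R (\<integral>x. fk 0 c (\<mu> + \<sigma> * x) \<partial>lborel)"
    unfolding Gi_def by (rule lborel_integral_real_affine[OF \<sigma>(1)])
  also have "(\<lambda>x. fk 0 c (\<mu> + \<sigma> * x)) = (\<lambda>x. exp (c * \<mu> - pi * \<mu>\<^sup>2) * (complex_of_real (exp (- x\<^sup>2/2)) * iexp ((b*\<sigma>)*x)))"
  proof
    fix x
    have "c * of_real (\<mu> + \<sigma> * x) - of_real pi * (of_real (\<mu> + \<sigma> * x))\<^sup>2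
       = (c * \<mu> - pi * \<mu>\<^sup>2) + (of_real (- x\<^sup>2/2) + \<i> * of_real ((b*\<sigma>)*x))"
      using \<sigma>(3) unfolding c \<mu>_def
      by (simp add: complex_eq_iff power2_eq_square field_simps)
    then show "fk 0 c (\<mu> + \<sigma> * x) = exp (c * \<mu> - pi * \<mu>\<^sup>2) * (complex_of_real (exp (- x\<^sup>2/2)) * iexp ((b*\<sigma>)*x))"
      by (simp only: fk_def gk_def power_0 mult_1_left exp_add exp_of_real)
  qed
  also have "\<bar>\<sigma>\<bar> *\<^sub>R (\<integral>x. exp (c * \<mu> - pi * \<mu>\<^sup>2) * (complex_of_real (exp (- x\<^sup>2/2)) * iexp ((b*\<sigma>)*x)) \<partial>lborel)
     = \<sigma> * exp (c * \<mu> - pi * \<mu>\<^sup>2) * (sqrt (2*pi) * exp (- (b*\<sigma>)\<^sup>2/2))"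
    using \<sigma> by (simp only: integral_mult_right_zero fourier_gauss) (simp add: scaleR_conv_of_real)
  also have "\<dots> = exp (c * \<mu> - pi * \<mu>\<^sup>2) * exp (- (b*\<sigma>)\<^sup>2/2)"
    by (simp add: \<sigma>_def)
  also have "\<dots> = exp (c\<^sup>2 / (4 * of_real pi))"
  proof -
    have "c * \<mu> - pi * \<mu>\<^sup>2 + complex_of_real (- (b*\<sigma>)\<^sup>2/2) = c\<^sup>2 / (4 * of_real pi)"
      using \<sigma>(3) unfolding c \<mu>_def
      by (simp add: complex_eq_iff power2_eq_square field_simps power_mult_distrib)
    then show ?thesis by (simp add: exp_add[symmetric] exp_of_real[symmetric])
  qed
  finally show ?thesis .
qed



fun qp :: "nat \<Rightarrow> complex \<Rightarrow> complex" where
  "qp 0 c = 1"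
| "qp (Suc 0) c = c / (2 * of_real pi)"
| "qp (Suc (Suc k)) c = (c * qp (Suc k) c + of_nat (Suc k) * qp k c) / (2 * of_real pi)"

lemma Gi_qp: "Gi k c = qp k c * exp (c\<^sup>2 / (4 * of_real pi))"
proof (induction k c rule: qp.induct)
  case (1 c) then show ?case by (simp add: Gi0)
next
  case (2 c)
  have "c * Gi 0 c - 2 * of_real pi * Gi (Suc 0) c = 0" using Gi_rec[of 0 c] by simp
  then show ?case by (simp add: Gi0 field_simps)
next
  case (3 k c)
  have "of_nat (Suc k) * Gi k c + c * Gi (Suc k) c - 2 * of_real pi * Gi (Suc (Suc k)) c = 0"
    using Gi_rec[of "Suc k" c] by simp
  then have "Gi (Suc (Suc k)) c = (of_nat (Suc k) * Gi k c + c * Gi (Suc k) c) / (2 * of_real pi)"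
    by (simp add: field_simps)
  then show ?case using 3 by (simp add: field_simps)
qed

lemma cpoly_mono: "cpoly G f \<Longrightarrow> G \<subseteq> G' \<Longrightarrow> cpoly G' f"
  by (induction rule: cpoly.induct) (auto intro: cpoly.intros)

lemma cpoly_comp: "cpoly G f \<Longrightarrow> (\<And>g. g \<in> G \<Longrightarrow> cpoly G' (\<lambda>x. g (\<phi> x))) \<Longrightarrow> cpoly G' (\<lambda>x. f (\<phi> x))"
  by (induction rule: cpoly.induct) (auto intro: cpoly.intros)

lemma cpoly_dep: "cpoly G f \<Longrightarrow> (\<And>g. g \<in> G \<Longrightarrow> g x = g y) \<Longrightarrow> f x = f y"
  by (induction rule: cpoly.induct) auto

lemma cpoly_sum: "finite I \<Longrightarrow> (\<And>i. i \<in> I \<Longrightarrow> cpoly G (f i)) \<Longrightarrow> cpoly G (\<lambda>x. \<Sum>i\<in>I. f i x)"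
  by (induction rule: finite_induct) (auto intro: cpoly.intros)

lemma cpoly_prod: "finite I \<Longrightarrow> (\<And>i. i \<in> I \<Longrightarrow> cpoly G (f i)) \<Longrightarrow> cpoly G (\<lambda>x. \<Prod>i\<in>I. f i x)"
  by (induction rule: finite_induct) (auto intro: cpoly.intros)

lemma cpoly_pow: "cpoly G f \<Longrightarrow> cpoly G (\<lambda>x. f x ^ n)"
  by (induction n) (auto intro: cpoly.intros)

lemma cpoly_sum_list: "(\<And>p. p \<in> set L \<Longrightarrow> cpoly G (f p)) \<Longrightarrow> cpoly G (\<lambda>x. \<Sum>p\<leftarrow>L. f p x)"
  by (induction L) (auto intro: cpoly.intros)

lemma cpoly_qp: "cpoly G g \<Longrightarrow> cpoly G (\<lambda>x. qp k (g x))"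
proof (induction k rule: less_induct)
  case (less k)
  consider "k = 0" | "k = Suc 0" | j where "k = Suc (Suc j)" by (metis not0_implies_Suc)
  then show ?case
  proof cases
    case 1 then show ?thesis by (simp add: cpoly.const)
  next
    case 2
    have "cpoly G (\<lambda>x. (1 / (2 * of_real pi)) * g x)" by (intro cpoly.mult cpoly.const less.prems)
    then show ?thesis using 2 by simp
  next
    case 3
    have "cpoly G (\<lambda>x. (1 / (2 * of_real pi)) * (g x * qp (Suc j) (g x) + of_nat (Suc j) * qp j (g x)))"
      using less 3 by (intro cpoly.mult cpoly.add cpoly.const) auto
    then show ?thesis using 3 by simp
  qed
qed

lemma sum_list_prod_distrib:
  fixes f :: "'a \<Rightarrow> complex" and g :: "'b \<Rightarrow> complex"
  shows "(\<Sum>p\<leftarrow>xs. f p) * (\<Sum>q\<leftarrow>ys. g q) = (\<Sum>pq\<leftarrow>List.product xs ys. f (fst pq) * g (snd pq))"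
  by (induction xs) (simp_all add: distrib_right sum_list_const_mult o_def)

definition mon :: "('j \<Rightarrow> 'a \<Rightarrow> real) \<Rightarrow> 'j set \<Rightarrow> ('j \<Rightarrow> nat) \<Rightarrow> 'a \<Rightarrow> complex" where
  "mon pr J \<beta> x = (\<Prod>j\<in>J. complex_of_real (pr j x) ^ \<beta> j)"

lemma cpoly_nf:
  assumes "cpoly (H \<union> (\<lambda>j x. complex_of_real (pr j x)) ` J) f" and "finite J"
  shows "\<exists>L. (\<forall>p\<in>set L. cpoly H (fst p)) \<and> (\<forall>x. f x = (\<Sum>p\<leftarrow>L. fst p x * mon pr J (snd p) x))"
  using assms(1)
proof (induction rule: cpoly.induct)
  case (const c)
  show ?case by (rule exI[of _ "[(\<lambda>x. c, \<lambda>j. 0)]"]) (auto simp: mon_def intro: cpoly.const)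
next
  case (gen g)
  then show ?case
  proof
    assume "g \<in> H"
    then show ?case by (intro exI[of _ "[(g, \<lambda>j. 0)]"]) (auto simp: mon_def intro: cpoly.gen)
  next
    assume "g \<in> (\<lambda>j x. complex_of_real (pr j x)) ` J"
    then obtain j0 where j0: "j0 \<in> J" "g = (\<lambda>x. complex_of_real (pr j0 x))" by auto
    have "mon pr J (\<lambda>j. if j = j0 then 1 else 0) x = complex_of_real (pr j0 x)" for x
      unfolding mon_def using j0(1) assms(2)
      by (simp add: if_distrib[where f="\<lambda>n. _ ^ n"] prod.delta cong: if_cong)
    then show ?case using j0 by (intro exI[of _ "[(\<lambda>x. 1, \<lambda>j. if j = j0 then 1 else 0)]"]) (auto intro: cpoly.const)
  qed
next
  case (add f g)
  then obtain L1 L2 where L1: "\<forall>p\<in>set L1. cpoly H (fst p)" "\<forall>x. f x = (\<Sum>p\<leftarrow>L1. fst p x * mon pr J (snd p) x)"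
    and L2: "\<forall>p\<in>set L2. cpoly H (fst p)" "\<forall>x. g x = (\<Sum>p\<leftarrow>L2. fst p x * mon pr J (snd p) x)" by blast
  show ?case by (rule exI[of _ "L1 @ L2"]) (use L1 L2 in auto)
next
  case (mult f g)
  then obtain L1 L2 where L1: "\<forall>p\<in>set L1. cpoly H (fst p)" "\<forall>x. f x = (\<Sum>p\<leftarrow>L1. fst p x * mon pr J (snd p) x)"
    and L2: "\<forall>p\<in>set L2. cpoly H (fst p)" "\<forall>x. g x = (\<Sum>p\<leftarrow>L2. fst p x * mon pr J (snd p) x)" by blast
  define L where "L = map (\<lambda>pq. (\<lambda>x. fst (fst pq) x * fst (snd pq) x, \<lambda>j. snd (fst pq) j + snd (snd pq) j)) (List.product L1 L2)"
  have mm: "mon pr J (\<lambda>j. \<beta> j + \<gamma> j) x = mon pr J \<beta> x * mon pr J \<gamma> x" for \<beta> \<gamma> x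
    unfolding mon_def by (simp add: power_add prod.distrib)
  show ?case
  proof (rule exI[of _ L], intro conjI allI ballI)
    fix p assume "p \<in> set L"
    then show "cpoly H (fst p)" using L1(1) L2(1) by (force simp: L_def intro!: cpoly.mult)
  next
    fix x
    show "f x * g x = (\<Sum>p\<leftarrow>L. fst p x * mon pr J (snd p) x)"
      unfolding L1(2)[rule_format] L2(2)[rule_format] sum_list_prod_distrib L_def
      by (simp add: o_def mm mult_ac)
  qed
qed



lemma sum_2k: "(\<Sum>j<2*(k::nat). F j) = (\<Sum>i<k. F (2*i) + F (2*i+1))"
  by (induction k) (simp_all add: add.assoc)

definition ccf :: "(nat \<Rightarrow> complex) \<Rightarrow> (nat \<Rightarrow> complex) \<Rightarrow> nat \<Rightarrow> complex" where
  "ccf a b j = (if even j then of_real pi * (a (j div 2) + b (j div 2))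
                else \<i> * of_real pi * (a (j div 2) - b (j div 2)))"

definition gexp :: "nat \<Rightarrow> (nat \<Rightarrow> complex) \<Rightarrow> (nat \<Rightarrow> complex) \<Rightarrow> (nat \<Rightarrow> real) \<Rightarrow> complex" where
  "gexp k a b Y = exp (of_real pi * (\<Sum>i<k. b i * cnj (zc Y i) + zc Y i * a i)
       - of_real pi * (\<Sum>i<k. of_real ((cmod (zc Y i))\<^sup>2)))"

definition crd :: "nat \<Rightarrow> (nat \<Rightarrow> real) \<Rightarrow> real" where "crd j Y = Y j"

lemma pair_alg:
  "ccf a b (2*i) * of_real s - of_real pi * (of_real s)\<^sup>2 + (ccf a b (2*i+1) * of_real t - of_real pi * (of_real t)\<^sup>2)
   = of_real pi * (b i * cnj (Complex s t) + Complex s t * a i) - of_real pi * (of_real ((cmod (Complex s t))\<^sup>2))"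
  unfolding complex_norm_square ccf_def
  by (simp add: complex_eq_iff algebra_simps power2_eq_square)

lemma gprod_eq: "(\<Prod>j<2*k. fk (\<alpha> j) (ccf a b j) (Y j)) = mon crd {..<2*k} \<alpha> Y * gexp k a b Y"
proof -
  have "(\<Prod>j<2*k. fk (\<alpha> j) (ccf a b j) (Y j))
     = mon crd {..<2*k} \<alpha> Y * (\<Prod>j<2*k. exp (ccf a b j * of_real (Y j) - of_real pi * (of_real (Y j))\<^sup>2))"
    unfolding mon_def fk_def gk_def crd_def by (simp add: prod.distrib)
  also have "(\<Prod>j<2*k. exp (ccf a b j * of_real (Y j) - of_real pi * (of_real (Y j))\<^sup>2))
      = exp (\<Sum>j<2*k. ccf a b j * of_real (Y j) - of_real pi * (of_real (Y j))\<^sup>2)"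
    by (simp add: exp_sum)
  also have "(\<Sum>j<2*k. ccf a b j * of_real (Y j) - of_real pi * (of_real (Y j))\<^sup>2)
      = (\<Sum>i<k. of_real pi * (b i * cnj (zc Y i) + zc Y i * a i) - of_real pi * (of_real ((cmod (zc Y i))\<^sup>2)))"
    unfolding sum_2k zc_def pair_alg ..
  also have "\<dots> = of_real pi * (\<Sum>i<k. b i * cnj (zc Y i) + zc Y i * a i)
       - of_real pi * (\<Sum>i<k. of_real ((cmod (zc Y i))\<^sup>2))"
    by (simp add: sum_subtractf sum_distrib_left)
  finally show ?thesis by (simp add: gexp_def)
qed

interpretation lb: product_sigma_finite "\<lambda>_::nat. lborel"
  by (simp add: product_sigma_finite_def sigma_finite_lborel)

lemma cc_sq: "(\<Sum>j<2*k. (ccf a b j)\<^sup>2 / (4 * of_real pi)) = of_real pi * (\<Sum>i<k. a i * b i)"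
proof -
  have "(ccf a b (2*i))\<^sup>2 / (4 * of_real pi) + (ccf a b (2*i+1))\<^sup>2 / (4 * of_real pi) = of_real pi * (a i * b i)" for i
    unfolding ccf_def by (simp add: field_simps power2_eq_square)
  then show ?thesis unfolding sum_2k by (simp add: sum_distrib_left)
qed

lemma GM:
  shows "integrable (leb k) (\<lambda>Y. mon crd {..<2*k} \<alpha> Y * gexp k a b Y)"
    and "(\<integral>Y. mon crd {..<2*k} \<alpha> Y * gexp k a b Y \<partial>leb k)
         = (\<Prod>j<2*k. qp (\<alpha> j) (ccf a b j)) * exp (of_real pi * (\<Sum>i<k. a i * b i))"
proof -
  have eq: "(\<lambda>Y. mon crd {..<2*k} \<alpha> Y * gexp k a b Y) = (\<lambda>Y. \<Prod>j<2*k. fk (\<alpha> j) (ccf a b j) (Y j))"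
    by (simp add: gprod_eq)
  show "integrable (leb k) (\<lambda>Y. mon crd {..<2*k} \<alpha> Y * gexp k a b Y)"
    unfolding eq leb_def by (intro lb.product_integrable_prod integrable_fk) auto
  have "(\<integral>Y. mon crd {..<2*k} \<alpha> Y * gexp k a b Y \<partial>leb k) = (\<Prod>j<2*k. Gi (\<alpha> j) (ccf a b j))"
    unfolding eq leb_def Gi_def by (intro lb.product_integral_prod integrable_fk) auto
  also have "\<dots> = (\<Prod>j<2*k. qp (\<alpha> j) (ccf a b j)) * exp (\<Sum>j<2*k. (ccf a b j)\<^sup>2 / (4 * of_real pi))"
    by (simp add: Gi_qp prod.distrib exp_sum)
  finally show "(\<integral>Y. mon crd {..<2*k} \<alpha> Y * gexp k a b Y \<partial>leb k)
         = (\<Prod>j<2*k. qp (\<alpha> j) (ccf a b j)) * exp (of_real pi * (\<Sum>i<k. a i * b i))"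
    by (simp add: cc_sq)
qed



lemma sum_restr1: "(m::nat) \<le> n \<Longrightarrow> (\<Sum>i<m. f i) = (\<Sum>i<n. if i < m then f i else 0)"
  by (rule sum.mono_neutral_cong_left) auto

lemma sum_restr2: "(m::nat) \<le> n \<Longrightarrow> (\<Sum>i\<in>{m..<n}. f i) = (\<Sum>i<n. if i < m then 0 else f i)"
  by (rule sum.mono_neutral_cong_left) auto

definition aW :: "nat \<Rightarrow> (nat \<Rightarrow> real) \<Rightarrow> nat \<Rightarrow> complex" where
  "aW m W i = (if i < m then cnj (zc W i) else 0)"

definition E0 :: "nat \<Rightarrow> nat \<Rightarrow> (nat \<Rightarrow> real) \<Rightarrow> (nat \<Rightarrow> real) \<Rightarrow> complex" where
  "E0 n m Z W = exp (- of_real (pi/2) * (\<Sum>i<n. of_real ((cmod (zc Z i))\<^sup>2))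
                     - of_real (pi/2) * (\<Sum>i<m. of_real ((cmod (zc W i))\<^sup>2)))"

lemma lin3: "(a::complex) * sum f I + (b * sum g I - c * sum h I) = (\<Sum>i\<in>I. a * f i + (b * g i - c * h i))"
  by (simp add: sum.distrib sum_subtractf sum_distrib_left)

lemma lin4: "((a::complex) * sum f I - b * sum g I) + (c * sum h I - d * sum k I) = (\<Sum>i\<in>I. (a * f i - b * g i) + (c * h i - d * k i))"
  by (simp add: sum.distrib sum_subtractf sum_distrib_left)

lemma expid1:
  assumes "m \<le> n"
  shows "Pk n Z Y * Enm n m Y W = E0 n m Z W * gexp n (aW m W) (zc Z) Y"
proof -
  have "(- (of_real (pi/2)) *
     (\<Sum>i<n. of_real ((cmod (zc Z i))\<^sup>2) + of_real ((cmod (zc Y i))\<^sup>2)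
              - 2 * zc Z i * cnj (zc Y i))) +
     (- (of_real (pi/2)) *
     (\<Sum>i<m. of_real ((cmod (zc Y i))\<^sup>2) + of_real ((cmod (zc W i))\<^sup>2)
              - 2 * zc Y i * cnj (zc W i))
     - (of_real (pi/2)) * (\<Sum>i\<in>{m..<n}. of_real ((cmod (zc Y i))\<^sup>2)))
   = (- of_real (pi/2) * (\<Sum>i<n. of_real ((cmod (zc Z i))\<^sup>2))
                     - of_real (pi/2) * (\<Sum>i<m. of_real ((cmod (zc W i))\<^sup>2))) +
     (of_real pi * (\<Sum>i<n. zc Z i * cnj (zc Y i) + zc Y i * aW m W i)
       - of_real pi * (\<Sum>i<n. of_real ((cmod (zc Y i))\<^sup>2)))"
    unfolding sum_restr1[OF assms, of "\<lambda>i. of_real ((cmod (zc W i))\<^sup>2)"]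
       sum_restr1[OF assms, of "\<lambda>i. of_real ((cmod (zc Y i))\<^sup>2) + of_real ((cmod (zc W i))\<^sup>2)
              - 2 * zc Y i * cnj (zc W i)"] sum_restr2[OF assms] lin3 lin4
    by (rule sum.cong) (auto simp: aW_def field_simps)
  then show ?thesis
    unfolding Pk_def Enm_def E0_def gexp_def by (simp only: mult_exp_exp)
qed



lemma expid2:
  assumes "m \<le> n"
  shows "E0 n m Z W * exp (of_real pi * (\<Sum>i<n. aW m W i * zc Z i)) * Pk m W V
       = E0 n m Z V * gexp m (\<lambda>i. cnj (zc V i)) (zc Z) W"
proof -
  have e: "(\<Sum>i<n. aW m W i * zc Z i) = (\<Sum>i<m. cnj (zc W i) * zc Z i)"
    unfolding sum_restr1[OF assms, of "\<lambda>i. cnj (zc W i) * zc Z i"] aW_def by (rule sum.cong) auto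
  have k: "- of_real (pi/2) * (\<Sum>i<m. of_real ((cmod (zc W i))\<^sup>2)) + of_real pi * (\<Sum>i<m. cnj (zc W i) * zc Z i)
     + (- of_real (pi/2) * (\<Sum>i<m. of_real ((cmod (zc W i))\<^sup>2) + of_real ((cmod (zc V i))\<^sup>2) - 2 * zc W i * cnj (zc V i)))
     = - of_real (pi/2) * (\<Sum>i<m. of_real ((cmod (zc V i))\<^sup>2))
       + (of_real pi * (\<Sum>i<m. zc Z i * cnj (zc W i) + zc W i * cnj (zc V i)) - of_real pi * (\<Sum>i<m. of_real ((cmod (zc W i))\<^sup>2)))"
    (is "?l = ?r")
  proof -
    have "?l = (\<Sum>i<m. - of_real (pi/2) * of_real ((cmod (zc W i))\<^sup>2) + of_real pi * (cnj (zc W i) * zc Z i)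
       + (- of_real (pi/2) * (of_real ((cmod (zc W i))\<^sup>2) + of_real ((cmod (zc V i))\<^sup>2) - 2 * zc W i * cnj (zc V i))))"
      by (simp only: sum.distrib sum_distrib_left)
    also have "\<dots> = (\<Sum>i<m. - of_real (pi/2) * of_real ((cmod (zc V i))\<^sup>2)
       + (of_real pi * (zc Z i * cnj (zc W i) + zc W i * cnj (zc V i)) - of_real pi * of_real ((cmod (zc W i))\<^sup>2)))"
      by (rule sum.cong) (auto simp: field_simps)
    also have "\<dots> = ?r"
      by (simp only: sum.distrib sum_distrib_left sum_subtractf distrib_left)
    finally show ?thesis .
  qed
  have "(- of_real (pi/2) * (\<Sum>i<n. of_real ((cmod (zc Z i))\<^sup>2))
                     - of_real (pi/2) * (\<Sum>i<m. of_real ((cmod (zc W i))\<^sup>2))) + of_real pi * (\<Sum>i<n. aW m W i * zc Z i)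
       + (- (of_real (pi/2)) * (\<Sum>i<m. of_real ((cmod (zc W i))\<^sup>2) + of_real ((cmod (zc V i))\<^sup>2)
              - 2 * zc W i * cnj (zc V i)))
     = (- of_real (pi/2) * (\<Sum>i<n. of_real ((cmod (zc Z i))\<^sup>2))
                     - of_real (pi/2) * (\<Sum>i<m. of_real ((cmod (zc V i))\<^sup>2))) +
       (of_real pi * (\<Sum>i<m. zc Z i * cnj (zc W i) + zc W i * cnj (zc V i))
       - of_real pi * (\<Sum>i<m. of_real ((cmod (zc W i))\<^sup>2)))"
    using k unfolding e by (simp add: algebra_simps)
  then show ?thesis
    unfolding Pk_def E0_def gexp_def by (simp only: mult_exp_exp)
qed

lemma expid3:
  assumes "m \<le> n"
  shows "E0 n m Z V * exp (of_real pi * (\<Sum>i<m. cnj (zc V i) * zc Z i)) = Enm n m Z V"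
proof -
  have s: "(\<Sum>i<n. f i) = (\<Sum>i<m. f i) + (\<Sum>i\<in>{m..<n}. f i)" for f :: "nat \<Rightarrow> complex"
    using assms by (metis atLeast0LessThan le0 sum.atLeastLessThan_concat)
  have k: "- of_real (pi/2) * (\<Sum>i<m. of_real ((cmod (zc Z i))\<^sup>2)) - of_real (pi/2) * (\<Sum>i<m. of_real ((cmod (zc V i))\<^sup>2))
      + of_real pi * (\<Sum>i<m. cnj (zc V i) * zc Z i)
     = - of_real (pi/2) * (\<Sum>i<m. of_real ((cmod (zc Z i))\<^sup>2) + of_real ((cmod (zc V i))\<^sup>2) - 2 * zc Z i * cnj (zc V i))"
    (is "?l = ?r")
  proof -
    have "?l = (\<Sum>i<m. - of_real (pi/2) * of_real ((cmod (zc Z i))\<^sup>2) - of_real (pi/2) * of_real ((cmod (zc V i))\<^sup>2)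
      + of_real pi * (cnj (zc V i) * zc Z i))"
      by (simp only: sum.distrib sum_distrib_left sum_subtractf)
    also have "\<dots> = (\<Sum>i<m. - of_real (pi/2) * (of_real ((cmod (zc Z i))\<^sup>2) + of_real ((cmod (zc V i))\<^sup>2) - 2 * zc Z i * cnj (zc V i)))"
      by (rule sum.cong) (auto simp: field_simps)
    also have "\<dots> = ?r"
      by (simp only: sum_distrib_left)
    finally show ?thesis .
  qed
  have "- of_real (pi/2) * (\<Sum>i<n. of_real ((cmod (zc Z i))\<^sup>2))
                     - of_real (pi/2) * (\<Sum>i<m. of_real ((cmod (zc V i))\<^sup>2))
        + of_real pi * (\<Sum>i<m. cnj (zc V i) * zc Z i)
     = - (of_real (pi/2)) *
     (\<Sum>i<m. of_real ((cmod (zc Z i))\<^sup>2) + of_real ((cmod (zc V i))\<^sup>2)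
              - 2 * zc Z i * cnj (zc V i))
     - (of_real (pi/2)) * (\<Sum>i\<in>{m..<n}. of_real ((cmod (zc Z i))\<^sup>2))"
    using k unfolding s[of "\<lambda>i. of_real ((cmod (zc Z i))\<^sup>2)"] by (simp add: algebra_simps)
  then show ?thesis
    unfolding Enm_def E0_def by (simp only: mult_exp_exp)
qed



lemma integral_sum_list:
  fixes f :: "'b \<Rightarrow> 'a \<Rightarrow> complex"
  assumes "\<And>p. p \<in> set L \<Longrightarrow> integrable M (f p)"
  shows "integrable M (\<lambda>x. \<Sum>p\<leftarrow>L. f p x) \<and> integral\<^sup>L M (\<lambda>x. \<Sum>p\<leftarrow>L. f p x) = (\<Sum>p\<leftarrow>L. integral\<^sup>L M (f p))"
  using assms
proof (induction L)
  case Nil then show ?case by simp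
next
  case (Cons a L)
  then show ?case by (simp add: Bochner_Integration.integral_add)
qed

definition H1 :: "nat \<Rightarrow> ((nat \<Rightarrow> real) \<times> (nat \<Rightarrow> real) \<Rightarrow> complex) set" where
  "H1 m = {(\<lambda>(Z,W). complex_of_real (W j)) | j. j < 2*m}"

definition H2 :: "nat \<Rightarrow> ((nat \<Rightarrow> real) \<times> (nat \<Rightarrow> real) \<Rightarrow> complex) set" where
  "H2 n = {(\<lambda>(Z,W). zc Z i) | i. i < n}"

lemma mon_fst: "mon (\<lambda>j x. fst x j) J \<beta> (Y, W) = mon crd J \<beta> Y"
  by (simp add: mon_def crd_def)

lemma mon_snd: "mon (\<lambda>j x. snd x j) J \<beta> (Z, W) = mon crd J \<beta> W"
  by (simp add: mon_def crd_def)

lemma step1: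
  assumes mn: "m \<le> n" and hA: "cpoly (real_gens n m) (case_prod A)"
  obtains L1 where "\<forall>p\<in>set L1. cpoly (H1 m) (fst p)"
    and "\<And>Z W. kcomp n (Pk n) (\<lambda>Z Z'. A Z Z' * Enm n m Z Z') Z W
        = E0 n m Z W * exp (of_real pi * (\<Sum>i<n. aW m W i * zc Z i))
          * (\<Sum>p\<leftarrow>L1. fst p (undefined, W) * (\<Prod>j<2*n. qp (snd p j) (ccf (aW m W) (zc Z) j)))"
proof -
  have "real_gens n m \<subseteq> H1 m \<union> (\<lambda>j x. complex_of_real (fst x j)) ` {..<2*n}"
  proof
    fix g assume "g \<in> real_gens n m"
    then consider j where "j < 2*n" "g = (\<lambda>(Z,W). complex_of_real (Z j))"
      | j where "j < 2*m" "g = (\<lambda>(Z,W). complex_of_real (W j))"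
      unfolding real_gens_def by blast
    then show "g \<in> H1 m \<union> (\<lambda>j x. complex_of_real (fst x j)) ` {..<2*n}"
    proof cases
      case 1
      then have "g = (\<lambda>x. complex_of_real (fst x j))" by (simp add: split_def)
      then show ?thesis using 1 by blast
    next
      case 2
      then show ?thesis unfolding H1_def by blast
    qed
  qed
  with hA have "cpoly (H1 m \<union> (\<lambda>j x. complex_of_real (fst x j)) ` {..<2*n}) (case_prod A)"
    by (rule cpoly_mono)
  from cpoly_nf[OF this] obtain L where
    L: "\<forall>p\<in>set L. cpoly (H1 m) (fst p)"
       "\<And>x. case_prod A x = (\<Sum>p\<leftarrow>L. fst p x * mon (\<lambda>j x. fst x j) {..<2*n} (snd p) x)"
    by auto
  have dep: "fst p (Y, W) = fst p (undefined, W)" if "p \<in> set L" for p Y W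
    using L(1) that by (intro cpoly_dep[of "H1 m" "fst p"]) (auto simp: H1_def)
  have AYW: "A Y W = (\<Sum>p\<leftarrow>L. fst p (undefined, W) * mon crd {..<2*n} (snd p) Y)" for Y W
  proof -
    have "A Y W = (\<Sum>p\<leftarrow>L. fst p (Y,W) * mon (\<lambda>j x. fst x j) {..<2*n} (snd p) (Y,W))"
      using L(2)[of "(Y,W)"] by simp
    also have "\<dots> = (\<Sum>p\<leftarrow>L. fst p (undefined, W) * mon crd {..<2*n} (snd p) Y)"
    proof (intro arg_cong[where f=sum_list] map_cong refl)
      fix p assume "p \<in> set L"
      then show "fst p (Y,W) * mon (\<lambda>j x. fst x j) {..<2*n} (snd p) (Y,W) = fst p (undefined, W) * mon crd {..<2*n} (snd p) Y"
        using dep[of p Y W] by (simp only: mon_fst)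
    qed
    finally show ?thesis .
  qed
  show ?thesis
  proof (rule that[OF L(1)])
    fix Z W
    have int_eq: "Pk n Z Y * (A Y W * Enm n m Y W)
      = (\<Sum>p\<leftarrow>L. (E0 n m Z W * fst p (undefined, W)) * (mon crd {..<2*n} (snd p) Y * gexp n (aW m W) (zc Z) Y))" for Y
    proof -
      have "Pk n Z Y * (A Y W * Enm n m Y W) = A Y W * (Pk n Z Y * Enm n m Y W)" by (simp add: mult_ac)
      also have "\<dots> = A Y W * (E0 n m Z W * gexp n (aW m W) (zc Z) Y)" by (simp add: expid1[OF mn])
      also have "\<dots> = (\<Sum>p\<leftarrow>L. (E0 n m Z W * fst p (undefined, W)) * (mon crd {..<2*n} (snd p) Y * gexp n (aW m W) (zc Z) Y))"
        unfolding AYW sum_list_mult_const[symmetric] by (simp add: mult_ac)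
      finally show ?thesis .
    qed
    have ints: "integrable (leb n) (\<lambda>Y. (E0 n m Z W * fst p (undefined, W)) * (mon crd {..<2*n} (snd p) Y * gexp n (aW m W) (zc Z) Y))" for p
      by (intro integrable_mult_right GM(1))
    have "kcomp n (Pk n) (\<lambda>Z Z'. A Z Z' * Enm n m Z Z') Z W
        = (\<integral>Y. (\<Sum>p\<leftarrow>L. (E0 n m Z W * fst p (undefined, W)) * (mon crd {..<2*n} (snd p) Y * gexp n (aW m W) (zc Z) Y)) \<partial>leb n)"
      unfolding kcomp_def int_eq ..
    also have "\<dots> = (\<Sum>p\<leftarrow>L. (E0 n m Z W * fst p (undefined, W)) * ((\<Prod>j<2*n. qp (snd p j) (ccf (aW m W) (zc Z) j)) * exp (of_real pi * (\<Sum>i<n. aW m W i * zc Z i))))"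
    proof -
      have "(\<integral>Y. (\<Sum>p\<leftarrow>L. (E0 n m Z W * fst p (undefined, W)) * (mon crd {..<2*n} (snd p) Y * gexp n (aW m W) (zc Z) Y)) \<partial>leb n)
        = (\<Sum>p\<leftarrow>L. (\<integral>Y. (E0 n m Z W * fst p (undefined, W)) * (mon crd {..<2*n} (snd p) Y * gexp n (aW m W) (zc Z) Y) \<partial>leb n))"
        using integral_sum_list[where L=L and M="leb n" and f="\<lambda>p Y. (E0 n m Z W * fst p (undefined, W)) * (mon crd {..<2*n} (snd p) Y * gexp n (aW m W) (zc Z) Y)"] ints
        by blast
      then show ?thesis by (simp only: integral_mult_right_zero GM(2))
    qed
    also have "\<dots> = E0 n m Z W * exp (of_real pi * (\<Sum>i<n. aW m W i * zc Z i))
          * (\<Sum>p\<leftarrow>L. fst p (undefined, W) * (\<Prod>j<2*n. qp (snd p j) (ccf (aW m W) (zc Z) j)))"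
      unfolding sum_list_const_mult[symmetric] by (simp add: mult_ac)
    finally show "kcomp n (Pk n) (\<lambda>Z Z'. A Z Z' * Enm n m Z Z') Z W
        = E0 n m Z W * exp (of_real pi * (\<Sum>i<n. aW m W i * zc Z i))
          * (\<Sum>p\<leftarrow>L. fst p (undefined, W) * (\<Prod>j<2*n. qp (snd p j) (ccf (aW m W) (zc Z) j)))" .
  qed
qed



lemma cpoly_diff: "cpoly G f \<Longrightarrow> cpoly G g \<Longrightarrow> cpoly G (\<lambda>x. f x - g x)"
proof -
  assume "cpoly G f" "cpoly G g"
  then have "cpoly G (\<lambda>x. f x + (-1) * g x)" by (intro cpoly.add cpoly.mult cpoly.const)
  then show ?thesis by simp
qed

lemma cnj_zc: "cnj (zc W i) = complex_of_real (W (2*i)) - \<i> * complex_of_real (W (2*i+1))"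
  by (simp add: zc_def complex_eq_iff)

definition G2s :: "nat \<Rightarrow> nat \<Rightarrow> ((nat \<Rightarrow> real) \<times> (nat \<Rightarrow> real) \<Rightarrow> complex) set" where
  "G2s n m = H2 n \<union> (\<lambda>j x. complex_of_real (snd x j)) ` {..<2*m}"

lemma cp_coord: "j < 2*m \<Longrightarrow> cpoly (G2s n m) (\<lambda>x. complex_of_real (snd x j))"
  by (intro cpoly.gen) (auto simp: G2s_def)

lemma cp_aW: "cpoly (G2s n m) (\<lambda>x. aW m (snd x) i)"
proof (cases "i < m")
  case True
  have "cpoly (G2s n m) (\<lambda>x. complex_of_real (snd x (2*i)) - \<i> * complex_of_real (snd x (2*i+1)))"
    using True by (intro cpoly_diff cpoly.mult cpoly.const cp_coord) auto
  then show ?thesis using True by (simp add: aW_def cnj_zc)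
next
  case False
  then show ?thesis by (simp add: aW_def cpoly.const)
qed

lemma cp_zcZ: "i < n \<Longrightarrow> cpoly (G2s n m) (\<lambda>x. zc (fst x) i)"
proof -
  assume i: "i < n"
  have "(\<lambda>x. zc (fst x) i) = (\<lambda>(Z,W). zc Z i)" by (simp add: split_def)
  moreover have "(\<lambda>(Z,W). zc Z i) \<in> G2s n m" using i by (auto simp: G2s_def H2_def)
  ultimately show ?thesis by (metis cpoly.gen)
qed

lemma cp_ccf: "j < 2*n \<Longrightarrow> cpoly (G2s n m) (\<lambda>x. ccf (aW m (snd x)) (zc (fst x)) j)"
proof -
  assume j: "j < 2*n"
  then have i: "j div 2 < n" by auto
  show ?thesis
  proof (cases "even j")
    case True
    have "cpoly (G2s n m) (\<lambda>x. of_real pi * (aW m (snd x) (j div 2) + zc (fst x) (j div 2)))"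
      by (intro cpoly.mult cpoly.add cpoly.const cp_aW cp_zcZ i)
    then show ?thesis using True by (simp add: ccf_def)
  next
    case False
    have "cpoly (G2s n m) (\<lambda>x. \<i> * of_real pi * (aW m (snd x) (j div 2) - zc (fst x) (j div 2)))"
      by (intro cpoly.mult cpoly_diff cpoly.const cp_aW cp_zcZ i)
    then show ?thesis using False by (simp add: ccf_def)
  qed
qed

definition Q1 :: "(((nat \<Rightarrow> real) \<times> (nat \<Rightarrow> real) \<Rightarrow> complex) \<times> (nat \<Rightarrow> nat)) list \<Rightarrow> nat \<Rightarrow> nat
   \<Rightarrow> (nat \<Rightarrow> real) \<times> (nat \<Rightarrow> real) \<Rightarrow> complex" where
  "Q1 L1 n m x = (\<Sum>p\<leftarrow>L1. fst p (undefined, snd x) * (\<Prod>j<2*n. qp (snd p j) (ccf (aW m (snd x)) (zc (fst x)) j)))"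

lemma cpoly_Q1:
  assumes "\<forall>p\<in>set L1. cpoly (H1 m) (fst p)"
  shows "cpoly (G2s n m) (Q1 L1 n m)"
  unfolding Q1_def
proof (intro cpoly_sum_list cpoly.mult cpoly_prod cpoly_qp cp_ccf)
  fix p assume p: "p \<in> set L1"
  show "cpoly (G2s n m) (\<lambda>x. fst p (undefined, snd x))"
  proof (rule cpoly_comp[of "H1 m" "fst p"])
    show "cpoly (H1 m) (fst p)" using assms p by auto
    fix g assume "g \<in> H1 m"
    then obtain j where j: "j < 2*m" "g = (\<lambda>(Z,W). complex_of_real (W j))" by (auto simp: H1_def)
    then show "cpoly (G2s n m) (\<lambda>x. g (undefined, snd x))" using cp_coord[OF j(1)] by simp
  qed
qed auto

lemma step2:
  assumes mn: "m \<le> n" and L1: "\<forall>p\<in>set L1. cpoly (H1 m) (fst p)"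
    and K: "\<And>Z W. K Z W = E0 n m Z W * exp (of_real pi * (\<Sum>i<n. aW m W i * zc Z i)) * Q1 L1 n m (Z, W)"
  obtains L2 where "\<forall>p\<in>set L2. cpoly (H2 n) (fst p)"
    and "\<And>Z V. kcomp m K (Pk m) Z V
        = Enm n m Z V * (\<Sum>p\<leftarrow>L2. fst p (Z, undefined) * (\<Prod>j<2*m. qp (snd p j) (ccf (\<lambda>i. cnj (zc V i)) (zc Z) j)))"
proof -
  have "cpoly (H2 n \<union> (\<lambda>j x. complex_of_real (snd x j)) ` {..<2*m}) (Q1 L1 n m)"
    using cpoly_Q1[OF L1] by (simp add: G2s_def)
  from cpoly_nf[OF this] obtain L where
    L: "\<forall>p\<in>set L. cpoly (H2 n) (fst p)"
       "\<And>x. Q1 L1 n m x = (\<Sum>p\<leftarrow>L. fst p x * mon (\<lambda>j x. snd x j) {..<2*m} (snd p) x)"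
    by auto
  have dep: "fst p (Z, W) = fst p (Z, undefined)" if "p \<in> set L" for p Z W
    using L(1) that by (intro cpoly_dep[of "H2 n" "fst p"]) (auto simp: H2_def)
  have QZW: "Q1 L1 n m (Z, W) = (\<Sum>p\<leftarrow>L. fst p (Z, undefined) * mon crd {..<2*m} (snd p) W)" for Z W
  proof -
    have "Q1 L1 n m (Z, W) = (\<Sum>p\<leftarrow>L. fst p (Z,W) * mon (\<lambda>j x. snd x j) {..<2*m} (snd p) (Z,W))"
      using L(2)[of "(Z,W)"] by simp
    also have "\<dots> = (\<Sum>p\<leftarrow>L. fst p (Z, undefined) * mon crd {..<2*m} (snd p) W)"
    proof (intro arg_cong[where f=sum_list] map_cong refl)
      fix p assume "p \<in> set L"
      then show "fst p (Z,W) * mon (\<lambda>j x. snd x j) {..<2*m} (snd p) (Z,W) = fst p (Z, undefined) * mon crd {..<2*m} (snd p) W"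
        using dep[of p Z W] by (simp only: mon_snd)
    qed
    finally show ?thesis .
  qed
  show ?thesis
  proof (rule that[OF L(1)])
    fix Z V
    let ?v = "\<lambda>i. cnj (zc V i)"
    have int_eq: "K Z W * Pk m W V
      = (\<Sum>p\<leftarrow>L. (E0 n m Z V * fst p (Z, undefined)) * (mon crd {..<2*m} (snd p) W * gexp m ?v (zc Z) W))" for W
    proof -
      have "K Z W * Pk m W V = Q1 L1 n m (Z, W) * (E0 n m Z W * exp (of_real pi * (\<Sum>i<n. aW m W i * zc Z i)) * Pk m W V)"
        by (simp add: K mult_ac)
      also have "\<dots> = Q1 L1 n m (Z, W) * (E0 n m Z V * gexp m ?v (zc Z) W)" by (simp only: expid2[OF mn])
      also have "\<dots> = (\<Sum>p\<leftarrow>L. (E0 n m Z V * fst p (Z, undefined)) * (mon crd {..<2*m} (snd p) W * gexp m ?v (zc Z) W))"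
        unfolding QZW sum_list_mult_const[symmetric] by (simp add: mult_ac)
      finally show ?thesis .
    qed
    have ints: "integrable (leb m) (\<lambda>W. (E0 n m Z V * fst p (Z, undefined)) * (mon crd {..<2*m} (snd p) W * gexp m ?v (zc Z) W))" for p
      by (intro integrable_mult_right GM(1))
    have "kcomp m K (Pk m) Z V
        = (\<integral>W. (\<Sum>p\<leftarrow>L. (E0 n m Z V * fst p (Z, undefined)) * (mon crd {..<2*m} (snd p) W * gexp m ?v (zc Z) W)) \<partial>leb m)"
      unfolding kcomp_def int_eq ..
    also have "\<dots> = (\<Sum>p\<leftarrow>L. (E0 n m Z V * fst p (Z, undefined)) * ((\<Prod>j<2*m. qp (snd p j) (ccf ?v (zc Z) j)) * exp (of_real pi * (\<Sum>i<m. ?v i * zc Z i))))"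
    proof -
      have "(\<integral>W. (\<Sum>p\<leftarrow>L. (E0 n m Z V * fst p (Z, undefined)) * (mon crd {..<2*m} (snd p) W * gexp m ?v (zc Z) W)) \<partial>leb m)
        = (\<Sum>p\<leftarrow>L. (\<integral>W. (E0 n m Z V * fst p (Z, undefined)) * (mon crd {..<2*m} (snd p) W * gexp m ?v (zc Z) W) \<partial>leb m))"
        using integral_sum_list[where L=L and M="leb m" and f="\<lambda>p W. (E0 n m Z V * fst p (Z, undefined)) * (mon crd {..<2*m} (snd p) W * gexp m ?v (zc Z) W)"] ints
        by blast
      then show ?thesis by (simp only: integral_mult_right_zero GM(2))
    qed
    also have "\<dots> = (E0 n m Z V * exp (of_real pi * (\<Sum>i<m. ?v i * zc Z i)))
          * (\<Sum>p\<leftarrow>L. fst p (Z, undefined) * (\<Prod>j<2*m. qp (snd p j) (ccf ?v (zc Z) j)))"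
      unfolding sum_list_const_mult[symmetric] by (simp add: mult_ac)
    also have "\<dots> = Enm n m Z V * (\<Sum>p\<leftarrow>L. fst p (Z, undefined) * (\<Prod>j<2*m. qp (snd p j) (ccf ?v (zc Z) j)))"
      by (simp only: expid3[OF mn])
    finally show "kcomp m K (Pk m) Z V
        = Enm n m Z V * (\<Sum>p\<leftarrow>L. fst p (Z, undefined) * (\<Prod>j<2*m. qp (snd p j) (ccf ?v (zc Z) j)))" .
  qed
qed



lemma hg_z: "i < n \<Longrightarrow> cpoly (hol_gens n m) (\<lambda>x. zc (fst x) i)"
proof -
  assume i: "i < n"
  have "(\<lambda>x. zc (fst x) i) = (\<lambda>(Z,W). zc Z i)" by (simp add: split_def)
  moreover have "(\<lambda>(Z,W). zc Z i) \<in> hol_gens n m" using i by (auto simp: hol_gens_def)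
  ultimately show ?thesis by (metis cpoly.gen)
qed

lemma hg_w: "i < m \<Longrightarrow> cpoly (hol_gens n m) (\<lambda>x. cnj (zc (snd x) i))"
proof -
  assume i: "i < m"
  have "(\<lambda>x. cnj (zc (snd x) i)) = (\<lambda>(Z,W). cnj (zc W i))" by (simp add: split_def)
  moreover have "(\<lambda>(Z,W). cnj (zc W i)) \<in> hol_gens n m" using i by (auto simp: hol_gens_def)
  ultimately show ?thesis by (metis cpoly.gen)
qed

lemma hg_ccf: "m \<le> n \<Longrightarrow> j < 2*m \<Longrightarrow> cpoly (hol_gens n m) (\<lambda>x. ccf (\<lambda>i. cnj (zc (snd x) i)) (zc (fst x)) j)"
proof -
  assume mn: "m \<le> n" and j: "j < 2*m"
  then have i: "j div 2 < m" "j div 2 < n" by auto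
  show ?thesis
  proof (cases "even j")
    case True
    have "cpoly (hol_gens n m) (\<lambda>x. of_real pi * (cnj (zc (snd x) (j div 2)) + zc (fst x) (j div 2)))"
      by (intro cpoly.mult cpoly.add cpoly.const hg_w hg_z i)
    then show ?thesis using True by (simp add: ccf_def)
  next
    case False
    have "cpoly (hol_gens n m) (\<lambda>x. \<i> * of_real pi * (cnj (zc (snd x) (j div 2)) - zc (fst x) (j div 2)))"
      by (intro cpoly.mult cpoly_diff cpoly.const hg_w hg_z i)
    then show ?thesis using False by (simp add: ccf_def)
  qed
qed

theorem corollary3p3:
  fixes n m :: nat and A :: "(nat \<Rightarrow> real) \<Rightarrow> (nat \<Rightarrow> real) \<Rightarrow> complex"
  assumes "m \<le> n"
    and "cpoly (real_gens n m) (case_prod A)"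
    and "\<forall>Z\<in>space (leb n). \<forall>Z''\<in>space (leb m).
           kcomp m (kcomp n (Pk n) (\<lambda>Z Z'. A Z Z' * Enm n m Z Z')) (Pk m) Z Z''
           = A Z Z'' * Enm n m Z Z''"
  shows "cpoly (hol_gens n m) (case_prod A)"
proof -
  note mn = assms(1)
  obtain L1 where L1: "\<forall>p\<in>set L1. cpoly (H1 m) (fst p)"
    and S1: "\<And>Z W. kcomp n (Pk n) (\<lambda>Z Z'. A Z Z' * Enm n m Z Z') Z W
        = E0 n m Z W * exp (of_real pi * (\<Sum>i<n. aW m W i * zc Z i))
          * (\<Sum>p\<leftarrow>L1. fst p (undefined, W) * (\<Prod>j<2*n. qp (snd p j) (ccf (aW m W) (zc Z) j)))"
    using step1[OF assms(1,2)] by blast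
  have K: "kcomp n (Pk n) (\<lambda>Z Z'. A Z Z' * Enm n m Z Z') Z W
      = E0 n m Z W * exp (of_real pi * (\<Sum>i<n. aW m W i * zc Z i)) * Q1 L1 n m (Z, W)" for Z W
    unfolding S1 Q1_def by simp
  obtain L2 where L2: "\<forall>p\<in>set L2. cpoly (H2 n) (fst p)"
    and S2: "\<And>Z V. kcomp m (kcomp n (Pk n) (\<lambda>Z Z'. A Z Z' * Enm n m Z Z')) (Pk m) Z V
        = Enm n m Z V * (\<Sum>p\<leftarrow>L2. fst p (Z, undefined) * (\<Prod>j<2*m. qp (snd p j) (ccf (\<lambda>i. cnj (zc V i)) (zc Z) j)))"
    using step2[OF mn L1 K] by blast
  define R where "R x = (\<Sum>p\<leftarrow>L2. fst p (fst x, undefined) * (\<Prod>j<2*m. qp (snd p j) (ccf (\<lambda>i. cnj (zc (snd x) i)) (zc (fst x)) j)))" for x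
  have Rpoly: "cpoly (hol_gens n m) R"
    unfolding R_def[abs_def]
  proof (intro cpoly_sum_list cpoly.mult cpoly_prod cpoly_qp hg_ccf mn)
    fix p assume p: "p \<in> set L2"
    show "cpoly (hol_gens n m) (\<lambda>x. fst p (fst x, undefined))"
    proof (rule cpoly_comp[of "H2 n" "fst p"])
      show "cpoly (H2 n) (fst p)" using L2 p by auto
      fix g assume "g \<in> H2 n"
      then obtain i where i: "i < n" "g = (\<lambda>(Z,W). zc Z i)" by (auto simp: H2_def)
      then show "cpoly (hol_gens n m) (\<lambda>x. g (fst x, undefined))" using hg_z[OF i(1)] by simp
    qed
  qed auto
  have eqsp: "A Z V = R (Z, V)" if Z: "Z \<in> space (leb n)" and V: "V \<in> space (leb m)" for Z V
  proof -
    have "A Z V * Enm n m Z V = Enm n m Z V * R (Z, V)"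
      using assms(3) Z V S2[of Z V] unfolding R_def by simp
    moreover have "Enm n m Z V \<noteq> 0" by (simp add: Enm_def)
    ultimately show ?thesis by (simp add: mult.commute)
  qed
  have "case_prod A x = R x" for x
  proof -
    obtain Z V where x: "x = (Z, V)" by (cases x)
    define rZ where "rZ = restrict Z {..<2*n}"
    define rV where "rV = restrict V {..<2*m}"
    have sp: "rZ \<in> space (leb n)" "rV \<in> space (leb m)"
      by (auto simp: rZ_def rV_def leb_def space_PiM)
    have "case_prod A (Z, V) = case_prod A (rZ, rV)"
    proof (rule cpoly_dep[OF assms(2)])
      fix g assume "g \<in> real_gens n m"
      then show "g (Z, V) = g (rZ, rV)" by (auto simp: real_gens_def rZ_def rV_def)
    qed
    moreover have "R (Z, V) = R (rZ, rV)"
    proof (rule cpoly_dep[OF Rpoly])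
      fix g assume "g \<in> hol_gens n m"
      then show "g (Z, V) = g (rZ, rV)" by (auto simp: hol_gens_def rZ_def rV_def zc_def)
    qed
    ultimately show ?thesis using eqsp[OF sp] x by simp
  qed
  then have "case_prod A = R" by (rule ext)
  then show ?thesis using Rpoly by simp
qed

end
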